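(* Suppose Assumptions 1, 2, 3 and 6 hold. Then for every sufficiently large $n$, $$R_n(\mathbf w_n^* )\ \ge\ \tfrac12\,R_n(m_n^* ),$$ and consequently $R_n(m_n^* )\asymp R_n(\mathbf w_n^* )$ (equivalently, $\Delta_n\le \tfrac12 R_n(m_n^* )$ for all large $n$). No restriction on the number $M_n$ of candidate models is needed.
   Context: Setting. For each sample size $n$ one observes $\mathbf y=\boldsymbol\mu+\boldsymbol\varepsilon\in\mathbb R^n$ with $\boldsymbol\mu=\mathbf X\boldsymbol\beta$, where $\mathbf X=(x_{ij})$ is a nonstochastic $n\times p_n$ matrix with $p_n<n$, $\boldsymbol\beta\in\mathbb R^{p_n}$, $E(\boldsymbol\varepsilon)=\mathbf 0$ and $\mathrm{Cov}(\boldsymbol\varepsilon)=\boldsymbol\Omega$ positive definite (all of these may depend on $n$). Fix integers $0=\nu_0<\nu_1<\cdots<\nu_{q_n}=p_n$. For $m=1,\dots,q_n$, $\mathbf X_m$ denotes the $n\times\nu_m$ matrix formed by the first $\nu_m$ columns of $\mathbf X$ (assumed of full column rank), $\mathbf P_m=\mathbf X_m(\mathbf X_m^\top\mathbf X_m)^{-1}\mathbf X_m^\top$, and $\mathbf P_0=\mathbf 0$. The candidate (nested) models are $m\in\{1,\dots,M_n\}$ with $2\le M_n\le q_n$. For a model $m$, $\hat{\boldsymbol\mu}_m=\mathbf P_m\mathbf y$ and $R_n(m)=E\|\hat{\boldsymbol\mu}_m-\boldsymbol\mu\|^2$. For $\mathbf w=(w_1,\dots,w_{M_n})^\top$, $\mathbf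 P(\mathbf w)=\sum_{m=1}^{M_n}w_m\mathbf P_m$, $\hat{\boldsymbol\mu}(\mathbf w)=\mathbf P(\mathbf w)\mathbf y$ and $R_n(\mathbf w)=E\|\hat{\boldsymbol\mu}(\mathbf w)-\boldsymbol\mu\|^2$. Let $\mathcal W_n=\{\mathbf w\in[0,1]^{M_n}:\sum_{m}w_m=1\}$. Let $m_n^*$ be the minimizer of $R_n(m)$ over $\{1,\dots,M_n\}$, $m_n^{**}$ the minimizer of $R_n(m)$ over $\{1,\dots,q_n\}$, and $\mathbf w_n^*$ the minimizer of $R_n(\mathbf w)$ over $\mathcal W_n$ (all assumed unique). Put $\Delta_n=R_n(m_n^* )-R_n(\mathbf w_n^* )$. Grouped variable importance: for $m=1,\dots,q_n$, $$\theta_{n,m}=\frac{n^{-1}\boldsymbol\mu^\top(\mathbf P_m-\mathbf P_{m-1})\boldsymbol\mu}{\mathrm{tr}\{(\mathbf P_m-\mathbf P_{m-1})\boldsymbol\Omega\}},$$ and $d_n=\max\{m\in\{1,\dots,q_n\}:\theta_{n,m}>0\}$. Assumption 1: $\|\boldsymbol\mu\|^2/n=O(1)$. Assumption 2: there are constants $0<c_1\le c_2<\infty$ with $c_1<\lambda_{\min}(\boldsymbol\Omega)\le\lambda_{\max}(\boldsymbol\Omega)<c_2$ for all $n$. Assumption 3: for each sufficiently large $n$, $\theta_{n,1}\ge\theta_{n,2}\ge\cdots\ge\theta_{n,q_n}$. Assumption 6: for each sufficiently large $n$, $R_n(m)$ is first decreasing and then increasing as $m$ runs from $1$ to $d_n$: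 there is $m_n'\in\{1,\dots,d_n-1\}$ with $R_n(m)<R_n(m-1)$ for $2\le m\le m_n'$, $R_n(m)\ge R_n(m-1)$ for $m_n'<m\le d_n$, and $R_n(d_n)>R_n(d_n-1)$. Notation: for positive deterministic sequences, $a_n\asymp b_n$ means $a_n/b_n$ and $b_n/a_n$ are both bounded for all large $n$. *)

theory Defs
  imports "HOL-Probability.Probability" "Jordan_Normal_Form.Gauss_Jordan_Elimination"
    "Jordan_Normal_Form.Char_Poly"
begin

definition mtrace :: "real mat \<Rightarrow> real" where
  "mtrace A = (\<Sum>i<dim_row A. A $$ (i, i))"

definition first_cols :: "real mat \<Rightarrow> nat \<Rightarrow> real mat" where
  "first_cols X k = mat (dim_row X) k (\<lambda>(i, j). X $$ (i, j))"

definition full_col_rank :: "real mat \<Rightarrow> bool" where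
  "full_col_rank A \<longleftrightarrow> (\<forall>v \<in> carrier_vec (dim_col A). A *\<^sub>v v = 0\<^sub>v (dim_row A) \<longrightarrow> v = 0\<^sub>v (dim_col A))"

definition pos_def :: "real mat \<Rightarrow> bool" where
  "pos_def A \<longleftrightarrow> A \<in> carrier_mat (dim_row A) (dim_row A) \<and> A\<^sup>T = A \<and>
     (\<forall>x \<in> carrier_vec (dim_row A). x \<noteq> 0\<^sub>v (dim_row A) \<longrightarrow> x \<bullet> (A *\<^sub>v x) > 0)"

definition hat :: "real mat \<Rightarrow> real mat" where
  "hat Z = Z * the (mat_inverse (Z\<^sup>T * Z)) * Z\<^sup>T"

definition projm :: "real mat \<Rightarrow> (nat \<Rightarrow> nat) \<Rightarrow> nat \<Rightarrow> real mat" where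
  "projm X nu m = (if m = 0 then 0\<^sub>m (dim_row X) (dim_row X) else hat (first_cols X (nu m)))"

definition projw :: "real mat \<Rightarrow> (nat \<Rightarrow> nat) \<Rightarrow> nat \<Rightarrow> (nat \<Rightarrow> real) \<Rightarrow> real mat" where
  "projw X nu M w = mat (dim_row X) (dim_row X) (\<lambda>(i, j). \<Sum>m=1..M. w m * projm X nu m $$ (i, j))"

definition obs :: "real vec \<Rightarrow> (nat \<Rightarrow> 'a \<Rightarrow> real) \<Rightarrow> 'a \<Rightarrow> real vec" where
  "obs mu eps \<omega> = mu + vec (dim_vec mu) (\<lambda>i. eps i \<omega>)"

definition risk :: "'a measure \<Rightarrow> (nat \<Rightarrow> 'a \<Rightarrow> real) \<Rightarrow> real vec \<Rightarrow> real mat \<Rightarrow> real" where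
  "risk Mes eps mu P = (\<integral>\<omega>. (P *\<^sub>v obs mu eps \<omega> - mu) \<bullet> (P *\<^sub>v obs mu eps \<omega> - mu) \<partial>Mes)"

definition theta :: "real mat \<Rightarrow> (nat \<Rightarrow> nat) \<Rightarrow> real vec \<Rightarrow> real mat \<Rightarrow> nat \<Rightarrow> real" where
  "theta X nu mu Om m =
     ((mu \<bullet> ((projm X nu m - projm X nu (m - 1)) *\<^sub>v mu)) / real (dim_vec mu))
     / mtrace ((projm X nu m - projm X nu (m - 1)) * Om)"

definition simplexW :: "nat \<Rightarrow> (nat \<Rightarrow> real) set" where
  "simplexW M = {w. (\<forall>m\<in>{1..M}. 0 \<le> w m \<and> w m \<le> 1) \<and> (\<Sum>m=1..M. w m) = 1}"

definition riskm :: "'a measure \<Rightarrow> (nat \<Rightarrow> 'a \<Rightarrow> real) \<Rightarrow> real vec \<Rightarrow> real mat \<Rightarrow> (nat \<Rightarrow> nat) \<Rightarrow> nat \<Rightarrow> real" where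
  "riskm Mes eps mu X nu m = risk Mes eps mu (projm X nu m)"

definition riskw :: "'a measure \<Rightarrow> (nat \<Rightarrow> 'a \<Rightarrow> real) \<Rightarrow> real vec \<Rightarrow> real mat \<Rightarrow> (nat \<Rightarrow> nat) \<Rightarrow> nat \<Rightarrow> (nat \<Rightarrow> real) \<Rightarrow> real" where
  "riskw Mes eps mu X nu M w = risk Mes eps mu (projw X nu M w)"

end

theory Submission
  imports Defs
begin


lemma self_scalar_zero:
  fixes x :: "real vec"
  assumes "x \<in> carrier_vec n" "x \<bullet> x = 0"
  shows "x = 0\<^sub>v n"
proof -
  have "(\<Sum>i\<in>{0..<n}. x $ i * x $ i) = 0" using assms unfolding scalar_prod_def by auto
  then have "\<forall>i\<in>{0..<n}. x $ i * x $ i = 0"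
    by (subst (asm) sum_nonneg_eq_0_iff) auto
  then show ?thesis using assms by (intro eq_vecI) auto
qed

lemma gram_inv:
  fixes Z :: "real mat"
  assumes Z: "Z \<in> carrier_mat n k" and fr: "full_col_rank Z"
  shows "\<exists>B. mat_inverse (Z\<^sup>T * Z) = Some B \<and> (Z\<^sup>T * Z) * B = 1\<^sub>m k \<and> B * (Z\<^sup>T * Z) = 1\<^sub>m k
     \<and> B \<in> carrier_mat k k"
proof -
  let ?G = "Z\<^sup>T * Z"
  have G: "?G \<in> carrier_mat k k" using Z by auto
  have "det ?G \<noteq> 0"
  proof
    assume "det ?G = 0"
    then obtain v where v: "v \<in> carrier_vec k" "v \<noteq> 0\<^sub>v k" "?G *\<^sub>v v = 0\<^sub>v k"
      using det_0_iff_vec_prod_zero[OF G] by auto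
    have zv: "Z *\<^sub>v v \<in> carrier_vec n" using Z v by auto
    have "(Z\<^sup>T *\<^sub>v (Z *\<^sub>v v)) \<bullet> v = (Z *\<^sub>v v) \<bullet> (Z *\<^sub>v v)"
      by (rule transpose_vec_mult_scalar[OF Z v(1) zv])
    moreover have "Z\<^sup>T *\<^sub>v (Z *\<^sub>v v) = ?G *\<^sub>v v"
      using Z v by (subst assoc_mult_mat_vec[of _ k n _ k]) auto
    ultimately have "(Z *\<^sub>v v) \<bullet> (Z *\<^sub>v v) = 0" using v by simp
    then have "Z *\<^sub>v v = 0\<^sub>v n" using self_scalar_zero zv by blast
    then have "v = 0\<^sub>v k" using fr v Z unfolding full_col_rank_def by auto
    then show False using v by simp
  qed
  then have U: "?G \<in> Units (ring_mat TYPE(real) k undefined)"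
    by (rule det_non_zero_imp_unit[OF G])
  then obtain B where B: "mat_inverse ?G = Some B"
    using mat_inverse(1)[OF G, of undefined] by (cases "mat_inverse ?G") auto
  then show ?thesis using mat_inverse(2)[OF G B] by auto
qed

lemma hat_basic:
  fixes Z :: "real mat"
  assumes Z: "Z \<in> carrier_mat n k" and fr: "full_col_rank Z"
  shows "hat Z \<in> carrier_mat n n" "(hat Z)\<^sup>T = hat Z" "hat Z * Z = Z"
proof -
  obtain B where B: "mat_inverse (Z\<^sup>T * Z) = Some B" "(Z\<^sup>T * Z) * B = 1\<^sub>m k"
    "B * (Z\<^sup>T * Z) = 1\<^sub>m k" "B \<in> carrier_mat k k"
    using gram_inv[OF Z fr] by blast
  have H: "hat Z = Z * B * Z\<^sup>T" unfolding hat_def B(1) by simp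
  have ZT: "Z\<^sup>T \<in> carrier_mat k n" using Z by simp
  have G: "Z\<^sup>T * Z \<in> carrier_mat k k" using Z by simp
  have GT: "(Z\<^sup>T * Z)\<^sup>T = Z\<^sup>T * Z"
    using transpose_mult[OF ZT Z] by simp
  have "(Z\<^sup>T * Z * B)\<^sup>T = 1\<^sub>m k" using B by simp
  then have BTG: "B\<^sup>T * (Z\<^sup>T * Z) = 1\<^sub>m k"
    using transpose_mult[OF G B(4)] GT by simp
  have BT: "B\<^sup>T \<in> carrier_mat k k" using B by simp
  have "B\<^sup>T = B\<^sup>T * ((Z\<^sup>T * Z) * B)" using B BT by simp
  also have "\<dots> = (B\<^sup>T * (Z\<^sup>T * Z)) * B" using BT G B(4) by simp
  also have "\<dots> = B" using BTG B(4) by simp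
  finally have Bsym: "B\<^sup>T = B" .
  show "hat Z \<in> carrier_mat n n" unfolding H using Z B(4) by simp
  have "(Z * B * Z\<^sup>T)\<^sup>T = (Z\<^sup>T)\<^sup>T * (Z * B)\<^sup>T"
    using Z B(4) by (subst transpose_mult[of _ n k _ n]) auto
  also have "\<dots> = Z * (B\<^sup>T * Z\<^sup>T)"
    using Z B(4) by (subst transpose_mult[of _ n k _ k]) auto
  also have "\<dots> = Z * B * Z\<^sup>T" using Bsym Z B(4) by simp
  finally show "(hat Z)\<^sup>T = hat Z" unfolding H .
  have ZB: "Z * B \<in> carrier_mat n k" using Z B(4) by simp
  have "Z * B * Z\<^sup>T * Z = (Z * B) * (Z\<^sup>T * Z)" using ZB ZT Z by (rule assoc_mult_mat)
  also have "\<dots> = Z * (B * (Z\<^sup>T * Z))" using Z B(4) G by (rule assoc_mult_mat)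
  also have "\<dots> = Z" using B(3) Z by simp
  finally show "hat Z * Z = Z" unfolding H .
qed

lemma hat_absorb:
  fixes Z Y :: "real mat"
  assumes Z: "Z \<in> carrier_mat n k" and fr: "full_col_rank Z"
    and Y: "Y \<in> carrier_mat n j" and fry: "full_col_rank Y"
    and HY: "hat Z * Y = Y"
  shows "hat Z * hat Y = hat Y" "hat Y * hat Z = hat Y"
proof -
  obtain B where B: "mat_inverse (Y\<^sup>T * Y) = Some B" "B \<in> carrier_mat j j"
    using gram_inv[OF Y fry] by blast
  have H: "hat Y = Y * B * Y\<^sup>T" unfolding hat_def B(1) by simp
  have HZ: "hat Z \<in> carrier_mat n n" using hat_basic[OF Z fr] by simp
  have YB: "Y * B \<in> carrier_mat n j" using Y B(2) by simp
  have YT: "Y\<^sup>T \<in> carrier_mat j n" using Y by simp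
  have "hat Z * (Y * B * Y\<^sup>T) = hat Z * (Y * B) * Y\<^sup>T"
    using HZ YB YT by (rule assoc_mult_mat[symmetric])
  also have "hat Z * (Y * B) = (hat Z * Y) * B" using HZ Y B(2) by (rule assoc_mult_mat[symmetric])
  finally have "hat Z * (Y * B * Y\<^sup>T) = (hat Z * Y) * B * Y\<^sup>T" .
  then show 1: "hat Z * hat Y = hat Y" unfolding H HY by simp
  have "hat Y * hat Z = (hat Y)\<^sup>T * (hat Z)\<^sup>T"
    using hat_basic(2)[OF Z fr] hat_basic(2)[OF Y fry] by simp
  also have "\<dots> = (hat Z * hat Y)\<^sup>T"
    using HZ hat_basic(1)[OF Y fry] by (subst transpose_mult[of _ n n _ n]) auto
  also have "\<dots> = hat Y" using 1 hat_basic(2)[OF Y fry] by simp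
  finally show "hat Y * hat Z = hat Y" .
qed

lemma hat_idem:
  fixes Z :: "real mat"
  assumes Z: "Z \<in> carrier_mat n k" and fr: "full_col_rank Z"
  shows "hat Z * hat Z = hat Z"
  using hat_absorb(1)[OF Z fr Z fr hat_basic(3)[OF Z fr]] .

lemma first_cols_carrier: "X \<in> carrier_mat n p \<Longrightarrow> first_cols X k \<in> carrier_mat n k"
  unfolding first_cols_def by auto

lemma hat_carrier: "Z \<in> carrier_mat n k \<Longrightarrow> hat Z \<in> carrier_mat n n"
  unfolding hat_def carrier_mat_def by simp

locale nested =
  fixes n p q :: nat and X :: "real mat" and nu :: "nat \<Rightarrow> nat"
  assumes Xc: "X \<in> carrier_mat n p"
    and nu0: "nu 0 = 0" and nu_strict: "\<forall>m < q. nu m < nu (Suc m)" and nuq: "nu q = p"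
    and frk: "\<forall>m \<in> {1..q}. full_col_rank (first_cols X (nu m))"
begin

abbreviation "P m \<equiv> projm X nu m"

lemma nu_mono: assumes "k \<le> m" "m \<le> q" shows "nu k \<le> nu m"
  using assms
proof (induction m)
  case 0 then show ?case by simp
next
  case (Suc m)
  show ?case
  proof (cases "k = Suc m")
    case True then show ?thesis by simp
  next
    case False
    then have "nu k \<le> nu m" using Suc by auto
    also have "nu m < nu (Suc m)" using nu_strict Suc by auto
    finally show ?thesis by simp
  qed
qed

lemma Pcar: "P m \<in> carrier_mat n n"
  using Xc unfolding projm_def by (auto intro!: hat_carrier first_cols_carrier)

lemma Psym: "m \<le> q \<Longrightarrow> (P m)\<^sup>T = P m"
  using hat_basic(2)[OF first_cols_carrier[OF Xc] ] frk unfolding projm_def by auto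

lemma hat_cols: assumes "1 \<le> k" "k \<le> m" "m \<le> q"
  shows "hat (first_cols X (nu m)) * first_cols X (nu k) = first_cols X (nu k)"
proof -
  let ?Zm = "first_cols X (nu m)" and ?Zk = "first_cols X (nu k)"
  have Zm: "?Zm \<in> carrier_mat n (nu m)" and Zk: "?Zk \<in> carrier_mat n (nu k)"
    using first_cols_carrier[OF Xc] by auto
  have fm: "full_col_rank ?Zm" using frk assms by auto
  have HZ: "hat ?Zm * ?Zm = ?Zm" using hat_basic(3)[OF Zm fm] .
  have le: "nu k \<le> nu m" using nu_mono assms by auto
  have H: "hat ?Zm \<in> carrier_mat n n" using hat_carrier[OF Zm] .
  show ?thesis
  proof (rule eq_matI)
    fix i j assume ij: "i < dim_row ?Zk" "j < dim_col ?Zk"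
    then have i: "i < n" and j: "j < nu k" using Zk by auto
    have "col ?Zk j = col ?Zm j" using j le Xc unfolding first_cols_def
      by (intro eq_vecI) auto
    then have "(hat ?Zm * ?Zk) $$ (i, j) = (hat ?Zm * ?Zm) $$ (i, j)"
      using i j le H Zm Zk by (simp add: index_mult_mat)
    also have "\<dots> = ?Zm $$ (i, j)" using HZ by simp
    also have "\<dots> = ?Zk $$ (i, j)" using i j le Xc unfolding first_cols_def by auto
    finally show "(hat ?Zm * ?Zk) $$ (i, j) = ?Zk $$ (i, j)" .
  qed (use H Zk in auto)
qed

lemma Pmult_le: assumes "k \<le> m" "m \<le> q"
  shows "P m * P k = P k" "P k * P m = P k"
proof -
  have "P m * P k = P k \<and> P k * P m = P k"
  proof (cases "k = 0")
    case True
    have "P 0 = 0\<^sub>m n n" using Xc by (simp add: projm_def)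
    then show ?thesis using Pcar[of m] True by (simp add: right_mult_zero_mat left_mult_zero_mat)
  next
    case False
    then have k1: "1 \<le> k" by simp
    have Zm: "first_cols X (nu m) \<in> carrier_mat n (nu m)" and Zk: "first_cols X (nu k) \<in> carrier_mat n (nu k)"
      using first_cols_carrier[OF Xc] by auto
    have fm: "full_col_rank (first_cols X (nu m))" and fk: "full_col_rank (first_cols X (nu k))"
      using frk assms k1 by auto
    have "m \<noteq> 0" using k1 assms by auto
    then show ?thesis using hat_absorb[OF Zm fm Zk fk hat_cols[OF k1 assms]] False
      unfolding projm_def by simp
  qed
  then show "P m * P k = P k" "P k * P m = P k" by auto
qed

lemma Pmult: assumes "k \<le> q" "m \<le> q" shows "P k * P m = P (min k m)"
  using Pmult_le[of k m] Pmult_le[of m k] assms by (cases "k \<le> m") (auto simp: min_def)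

end




lemma risk_formula:
  fixes Mes :: "'a measure" and eps :: "nat \<Rightarrow> 'a \<Rightarrow> real"
  assumes ps: "prob_space Mes" and Pc: "P \<in> carrier_mat n n" and mu: "mu \<in> carrier_vec n"
   and e1: "\<forall>i<n. integrable Mes (eps i) \<and> (\<integral>\<omega>. eps i \<omega> \<partial>Mes) = 0"
   and e2: "\<forall>i<n. \<forall>j<n. integrable Mes (\<lambda>\<omega>. eps i \<omega> * eps j \<omega>) \<and>
              (\<integral>\<omega>. eps i \<omega> * eps j \<omega> \<partial>Mes) = Om $$ (i,j)"
  shows "risk Mes eps mu P = (\<Sum>k<n. ((P *\<^sub>v mu) $ k - mu $ k)^2)
     + (\<Sum>k<n. \<Sum>i<n. \<Sum>j<n. P $$ (k,i) * P $$ (k,j) * Om $$ (i,j))"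
proof -
  define d where "d k = (P *\<^sub>v mu) $ k - mu $ k" for k
  define g where "g k \<omega> = d k ^ 2 + 2 * d k * (\<Sum>i<n. P $$ (k,i) * eps i \<omega>)
      + (\<Sum>i<n. \<Sum>j<n. P $$ (k,i) * P $$ (k,j) * (eps i \<omega> * eps j \<omega>))" for k \<omega>
  have pt: "(P *\<^sub>v obs mu eps \<omega> - mu) \<bullet> (P *\<^sub>v obs mu eps \<omega> - mu) = (\<Sum>k<n. g k \<omega>)" for \<omega>
  proof -
    let ?e = "vec n (\<lambda>i. eps i \<omega>)"
    have comp: "(P *\<^sub>v obs mu eps \<omega> - mu) $ k = d k + (\<Sum>i<n. P $$ (k,i) * eps i \<omega>)" if k: "k < n" for k
    proof -
      have "obs mu eps \<omega> = mu + ?e" using mu unfolding obs_def by simp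
      then have "P *\<^sub>v obs mu eps \<omega> = P *\<^sub>v mu + P *\<^sub>v ?e"
        using Pc mu by (simp add: mult_add_distrib_mat_vec[of P n n])
      moreover have "(P *\<^sub>v ?e) $ k = (\<Sum>i<n. P $$ (k,i) * eps i \<omega>)"
        using Pc k by (simp add: mult_mat_vec_def scalar_prod_def row_def atLeast0LessThan)
      ultimately show ?thesis using k Pc mu unfolding d_def by simp
    qed
    have "(P *\<^sub>v obs mu eps \<omega> - mu) \<bullet> (P *\<^sub>v obs mu eps \<omega> - mu)
       = (\<Sum>k<n. (d k + (\<Sum>i<n. P $$ (k,i) * eps i \<omega>)) * (d k + (\<Sum>i<n. P $$ (k,i) * eps i \<omega>)))"
      using Pc mu comp unfolding scalar_prod_def by (simp add: atLeast0LessThan)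
    also have "\<dots> = (\<Sum>k<n. g k \<omega>)"
    proof (rule sum.cong[OF refl])
      fix k
      have "(\<Sum>i<n. P $$ (k,i) * eps i \<omega>) * (\<Sum>i<n. P $$ (k,i) * eps i \<omega>)
          = (\<Sum>i<n. \<Sum>j<n. P $$ (k,i) * P $$ (k,j) * (eps i \<omega> * eps j \<omega>))"
        by (simp add: sum_product algebra_simps)
      then show "(d k + (\<Sum>i<n. P $$ (k,i) * eps i \<omega>)) * (d k + (\<Sum>i<n. P $$ (k,i) * eps i \<omega>)) = g k \<omega>"
        unfolding g_def by (simp add: algebra_simps power2_eq_square)
    qed
    finally show ?thesis .
  qed
  have ie: "integrable Mes (eps i)" "integral\<^sup>L Mes (eps i) = 0" if "i < n" for i using e1 that by auto
  have iee: "integrable Mes (\<lambda>\<omega>. eps i \<omega> * eps j \<omega>)" "(\<integral>\<omega>. eps i \<omega> * eps j \<omega> \<partial>Mes) = Om $$ (i,j)"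
    if "i < n" "j < n" for i j using e2 that by auto
  have ic: "integrable Mes (\<lambda>\<omega>. c)" for c :: real
    using ps by (simp add: prob_space.finite_measure finite_measure.integrable_const)
  have gi: "integrable Mes (g k)" for k
    unfolding g_def
    by (intro Bochner_Integration.integrable_add Bochner_Integration.integrable_sum integrable_mult_right ic ie iee) auto
  have gint: "(\<integral>\<omega>. g k \<omega> \<partial>Mes) = d k ^ 2 + (\<Sum>i<n. \<Sum>j<n. P $$ (k,i) * P $$ (k,j) * Om $$ (i,j))" for k
  proof -
    have a: "(\<integral>\<omega>. d k ^ 2 \<partial>Mes) = d k ^ 2" using ps by (simp add: prob_space.prob_space)
    have b: "(\<integral>\<omega>. 2 * d k * (\<Sum>i<n. P $$ (k,i) * eps i \<omega>) \<partial>Mes) = 0"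
      using ie by (simp add: Bochner_Integration.integral_sum integrable_mult_right)
    have c: "(\<integral>\<omega>. (\<Sum>i<n. \<Sum>j<n. P $$ (k,i) * P $$ (k,j) * (eps i \<omega> * eps j \<omega>)) \<partial>Mes)
       = (\<Sum>i<n. \<Sum>j<n. P $$ (k,i) * P $$ (k,j) * Om $$ (i,j))"
    proof -
      have "(\<integral>\<omega>. (\<Sum>i<n. \<Sum>j<n. P $$ (k,i) * P $$ (k,j) * (eps i \<omega> * eps j \<omega>)) \<partial>Mes)
          = (\<Sum>i<n. \<integral>\<omega>. (\<Sum>j<n. P $$ (k,i) * P $$ (k,j) * (eps i \<omega> * eps j \<omega>)) \<partial>Mes)"
        by (rule Bochner_Integration.integral_sum) (intro Bochner_Integration.integrable_sum integrable_mult_right iee; simp)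
      also have "\<dots> = (\<Sum>i<n. \<Sum>j<n. P $$ (k,i) * P $$ (k,j) * Om $$ (i,j))"
      proof (rule sum.cong[OF refl])
        fix i assume i: "i \<in> {..<n}"
        have "(\<integral>\<omega>. (\<Sum>j<n. P $$ (k,i) * P $$ (k,j) * (eps i \<omega> * eps j \<omega>)) \<partial>Mes)
          = (\<Sum>j<n. \<integral>\<omega>. P $$ (k,i) * P $$ (k,j) * (eps i \<omega> * eps j \<omega>) \<partial>Mes)"
          by (rule Bochner_Integration.integral_sum) (intro integrable_mult_right iee; use i in simp)
        also have "\<dots> = (\<Sum>j<n. P $$ (k,i) * P $$ (k,j) * Om $$ (i,j))"
          using i iee by (intro sum.cong[OF refl]) simp
        finally show "(\<integral>\<omega>. (\<Sum>j<n. P $$ (k,i) * P $$ (k,j) * (eps i \<omega> * eps j \<omega>)) \<partial>Mes)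
          = (\<Sum>j<n. P $$ (k,i) * P $$ (k,j) * Om $$ (i,j))" .
      qed
      finally show ?thesis .
    qed
    show ?thesis unfolding g_def
      by (subst Bochner_Integration.integral_add, (intro Bochner_Integration.integrable_add Bochner_Integration.integrable_sum integrable_mult_right ic ie iee; simp)+,
          subst Bochner_Integration.integral_add, (intro Bochner_Integration.integrable_add Bochner_Integration.integrable_sum integrable_mult_right ic ie iee; simp)+)
         (simp only: a b c)
  qed
  have "risk Mes eps mu P = (\<integral>\<omega>. (\<Sum>k<n. g k \<omega>) \<partial>Mes)" unfolding risk_def using pt by simp
  also have "\<dots> = (\<Sum>k<n. \<integral>\<omega>. g k \<omega> \<partial>Mes)" by (rule Bochner_Integration.integral_sum) (use gi in auto)
  also have "\<dots> = (\<Sum>k<n. d k ^ 2) + (\<Sum>k<n. \<Sum>i<n. \<Sum>j<n. P $$ (k,i) * P $$ (k,j) * Om $$ (i,j))"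
    by (simp add: gint sum.distrib)
  finally show ?thesis unfolding d_def .
qed




lemma swap_out2:
  "(\<Sum>k\<in>K. \<Sum>m\<in>I. \<Sum>l\<in>J. F k m l) = (\<Sum>m\<in>I. \<Sum>l\<in>J. \<Sum>k\<in>K. (F k m l :: real))"
proof -
  have "(\<Sum>k\<in>K. \<Sum>m\<in>I. \<Sum>l\<in>J. F k m l) = (\<Sum>m\<in>I. \<Sum>k\<in>K. \<Sum>l\<in>J. F k m l)" by (rule sum.swap)
  also have "\<dots> = (\<Sum>m\<in>I. \<Sum>l\<in>J. \<Sum>k\<in>K. F k m l)" by (rule sum.cong[OF refl], rule sum.swap)
  finally show ?thesis .
qed

lemma quad_exp:
  "(\<Sum>k\<in>K. (\<Sum>m\<in>I. w m * x m k) * (\<Sum>l\<in>I. w l * y l k))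
     = (\<Sum>m\<in>I. \<Sum>l\<in>I. w m * w l * (\<Sum>k\<in>K. x m k * y l k :: real))"
proof -
  have "(\<Sum>k\<in>K. (\<Sum>m\<in>I. w m * x m k) * (\<Sum>l\<in>I. w l * y l k))
      = (\<Sum>k\<in>K. \<Sum>m\<in>I. \<Sum>l\<in>I. w m * w l * (x m k * y l k))"
    by (simp add: sum_product algebra_simps)
  also have "\<dots> = (\<Sum>m\<in>I. \<Sum>l\<in>I. \<Sum>k\<in>K. w m * w l * (x m k * y l k))" by (rule swap_out2)
  also have "\<dots> = (\<Sum>m\<in>I. \<Sum>l\<in>I. w m * w l * (\<Sum>k\<in>K. x m k * y l k))"
    by (simp add: sum_distrib_left)
  finally show ?thesis .
qed

lemma lin_exp:
  "(\<Sum>k\<in>K. (\<Sum>m\<in>I. w m * x m k) * y k) = (\<Sum>m\<in>I. w m * (\<Sum>k\<in>K. x m k * y k :: real))"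
proof -
  have "(\<Sum>k\<in>K. (\<Sum>m\<in>I. w m * x m k) * y k) = (\<Sum>k\<in>K. \<Sum>m\<in>I. w m * (x m k * y k))"
    by (simp add: sum_distrib_right mult.assoc)
  also have "\<dots> = (\<Sum>m\<in>I. \<Sum>k\<in>K. w m * (x m k * y k))" by (rule sum.swap)
  also have "\<dots> = (\<Sum>m\<in>I. w m * (\<Sum>k\<in>K. x m k * y k))" by (simp add: sum_distrib_left)
  finally show ?thesis .
qed

lemma prod2: "(\<Sum>m\<in>I. w m * a m) * (\<Sum>l\<in>I. w l * b l) * q = (\<Sum>m\<in>I. \<Sum>l\<in>I. w m * w l * (a m * b l * (q::real)))"
proof -
  have "(\<Sum>m\<in>I. w m * a m) * (\<Sum>l\<in>I. w l * b l) * q = (\<Sum>m\<in>I. \<Sum>l\<in>I. (w m * a m) * (w l * b l) * q)"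
    by (simp add: sum_distrib_left sum_distrib_right, rule sum.swap)
  also have "\<dots> = (\<Sum>m\<in>I. \<Sum>l\<in>I. w m * w l * (a m * b l * (q::real)))"
    by (intro sum.cong refl) (simp add: mult_ac)
  finally show ?thesis .
qed

lemma triple_exp:
  "(\<Sum>k\<in>K. \<Sum>i\<in>K. \<Sum>j\<in>K. (\<Sum>m\<in>I. w m * A m k i) * (\<Sum>l\<in>I. w l * A l k j) * Q i j)
   = (\<Sum>m\<in>I. \<Sum>l\<in>I. w m * w l * (\<Sum>k\<in>K. \<Sum>i\<in>K. \<Sum>j\<in>K. A m k i * A l k j * (Q i j :: real)))"
proof -
  have "(\<Sum>k\<in>K. \<Sum>i\<in>K. \<Sum>j\<in>K. (\<Sum>m\<in>I. w m * A m k i) * (\<Sum>l\<in>I. w l * A l k j) * Q i j)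
    = (\<Sum>k\<in>K. \<Sum>i\<in>K. \<Sum>j\<in>K. \<Sum>m\<in>I. \<Sum>l\<in>I. w m * w l * (A m k i * A l k j * Q i j))"
    by (simp only: prod2)
  also have "\<dots> = (\<Sum>k\<in>K. \<Sum>i\<in>K. \<Sum>m\<in>I. \<Sum>l\<in>I. \<Sum>j\<in>K. w m * w l * (A m k i * A l k j * Q i j))"
    by (intro sum.cong[OF refl] swap_out2)
  also have "\<dots> = (\<Sum>k\<in>K. \<Sum>m\<in>I. \<Sum>l\<in>I. \<Sum>i\<in>K. \<Sum>j\<in>K. w m * w l * (A m k i * A l k j * Q i j))"
    by (intro sum.cong[OF refl] swap_out2)
  also have "\<dots> = (\<Sum>m\<in>I. \<Sum>l\<in>I. \<Sum>k\<in>K. \<Sum>i\<in>K. \<Sum>j\<in>K. w m * w l * (A m k i * A l k j * Q i j))"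
    by (rule swap_out2)
  also have "\<dots> = (\<Sum>m\<in>I. \<Sum>l\<in>I. w m * w l * (\<Sum>k\<in>K. \<Sum>i\<in>K. \<Sum>j\<in>K. A m k i * A l k j * Q i j))"
    by (simp add: sum_distrib_left)
  finally show ?thesis .
qed

lemma BB_trace:
  fixes A C Om :: "real mat"
  assumes A: "A \<in> carrier_mat n n" and C: "C \<in> carrier_mat n n" and Om: "Om \<in> carrier_mat n n"
    and sym: "Om\<^sup>T = Om"
  shows "(\<Sum>k<n. \<Sum>i<n. \<Sum>j<n. A $$ (k,i) * C $$ (k,j) * Om $$ (i,j)) = mtrace (A\<^sup>T * C * Om)"
proof -
  have symij: "Om $$ (j,i) = Om $$ (i,j)" if "i < n" "j < n" for i j
    using arg_cong[OF sym, of "\<lambda>M. M $$ (i,j)"] that Om by auto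
  have "mtrace (A\<^sup>T * C * Om) = (\<Sum>i<n. \<Sum>k<n. A $$ (k,i) * (\<Sum>j<n. C $$ (k,j) * Om $$ (j,i)))"
    unfolding mtrace_def using A C Om
    by (simp add: index_mult_mat scalar_prod_def atLeast0LessThan)
  also have "\<dots> = (\<Sum>i<n. \<Sum>k<n. \<Sum>j<n. A $$ (k,i) * C $$ (k,j) * Om $$ (i,j))"
    by (intro sum.cong refl) (simp add: sum_distrib_left symij mult.assoc)
  also have "\<dots> = (\<Sum>k<n. \<Sum>i<n. \<Sum>j<n. A $$ (k,i) * C $$ (k,j) * Om $$ (i,j))"
    by (rule sum.swap)
  finally show ?thesis by simp
qed




lemma mv_idx: "A \<in> carrier_mat n n \<Longrightarrow> k < n \<Longrightarrow> mu \<in> carrier_vec n \<Longrightarrow>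
   (A *\<^sub>v mu) $ k = (\<Sum>i<n. A $$ (k,i) * mu $ i)"
  by (auto simp: mult_mat_vec_def scalar_prod_def atLeast0LessThan intro!: sum.cong)

locale nested2 = nested +
  fixes Om :: "real mat" and mu :: "real vec"
  assumes Omc: "Om \<in> carrier_mat n n" and Omsym: "Om\<^sup>T = Om" and muc: "mu \<in> carrier_vec n"
begin

definition c where "c m = mu \<bullet> (P m *\<^sub>v mu)"
definition t where "t m = mtrace (P m * Om)"

lemma PW_car: "projw X nu M w \<in> carrier_mat n n"
  using Xc unfolding projw_def by auto

lemma PW_idx: "k < n \<Longrightarrow> i < n \<Longrightarrow> projw X nu M w $$ (k,i) = (\<Sum>m=1..M. w m * P m $$ (k,i))"
  using Xc unfolding projw_def by auto

lemma PW_mv: assumes k: "k < n"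
  shows "(projw X nu M w *\<^sub>v mu) $ k = (\<Sum>m=1..M. w m * (P m *\<^sub>v mu) $ k)"
proof -
  have "(projw X nu M w *\<^sub>v mu) $ k = (\<Sum>i<n. (\<Sum>m=1..M. w m * P m $$ (k,i)) * mu $ i)"
    using mv_idx[OF PW_car k muc] PW_idx[OF k] by simp
  also have "\<dots> = (\<Sum>m=1..M. w m * (\<Sum>i<n. P m $$ (k,i) * mu $ i))" by (rule lin_exp)
  also have "\<dots> = (\<Sum>m=1..M. w m * (P m *\<^sub>v mu) $ k)"
    using mv_idx[OF Pcar k muc] by simp
  finally show ?thesis .
qed

lemma uc: "(\<Sum>k<n. (P m *\<^sub>v mu) $ k * mu $ k) = c m"
  unfolding c_def using muc Pcar[of m] by (simp add: scalar_prod_def atLeast0LessThan mult.commute)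

lemma uu: assumes "a \<le> q" "b \<le> q"
  shows "(\<Sum>k<n. (P a *\<^sub>v mu) $ k * (P b *\<^sub>v mu) $ k) = c (min a b)"
proof -
  have Pa: "P a \<in> carrier_mat n n" "P b \<in> carrier_mat n n" using Pcar by auto
  have "(\<Sum>k<n. (P a *\<^sub>v mu) $ k * (P b *\<^sub>v mu) $ k) = ((P a)\<^sup>T *\<^sub>v mu) \<bullet> (P b *\<^sub>v mu)"
    using Psym[OF assms(1)] Pa muc by (simp add: scalar_prod_def atLeast0LessThan)
  also have "\<dots> = mu \<bullet> (P a *\<^sub>v (P b *\<^sub>v mu))"
    using Pa muc by (intro transpose_vec_mult_scalar) auto
  also have "\<dots> = mu \<bullet> ((P a * P b) *\<^sub>v mu)"
    using Pa muc by simp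
  also have "\<dots> = c (min a b)" unfolding c_def Pmult[OF assms] ..
  finally show ?thesis .
qed

lemma BBP: assumes "a \<le> q" "b \<le> q"
  shows "(\<Sum>k<n. \<Sum>i<n. \<Sum>j<n. P a $$ (k,i) * P b $$ (k,j) * Om $$ (i,j)) = t (min a b)"
proof -
  have "(\<Sum>k<n. \<Sum>i<n. \<Sum>j<n. P a $$ (k,i) * P b $$ (k,j) * Om $$ (i,j)) = mtrace ((P a)\<^sup>T * P b * Om)"
    using Pcar Omc Omsym by (intro BB_trace) auto
  also have "\<dots> = t (min a b)" unfolding t_def Psym[OF assms(1)] Pmult[OF assms] ..
  finally show ?thesis .
qed

lemma riskW:
  fixes Mes :: "'a measure" and eps :: "nat \<Rightarrow> 'a \<Rightarrow> real"
  assumes ps: "prob_space Mes" and Mq: "M \<le> q"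
   and e1: "\<forall>i<n. integrable Mes (eps i) \<and> (\<integral>\<omega>. eps i \<omega> \<partial>Mes) = 0"
   and e2: "\<forall>i<n. \<forall>j<n. integrable Mes (\<lambda>\<omega>. eps i \<omega> * eps j \<omega>) \<and>
              (\<integral>\<omega>. eps i \<omega> * eps j \<omega> \<partial>Mes) = Om $$ (i,j)"
  shows "risk Mes eps mu (projw X nu M w) = (\<Sum>k<n. mu $ k ^ 2) - 2 * (\<Sum>m=1..M. w m * c m)
     + (\<Sum>m=1..M. \<Sum>l=1..M. w m * w l * (c (min m l) + t (min m l)))"
proof -
  let ?u = "\<lambda>m k. (P m *\<^sub>v mu) $ k"
  let ?A = "\<lambda>m k i. P m $$ (k,i)"
  have rf: "risk Mes eps mu (projw X nu M w) = (\<Sum>k<n. ((projw X nu M w *\<^sub>v mu) $ k - mu $ k)^2)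
     + (\<Sum>k<n. \<Sum>i<n. \<Sum>j<n. projw X nu M w $$ (k,i) * projw X nu M w $$ (k,j) * Om $$ (i,j))"
    by (rule risk_formula[OF ps PW_car muc e1 e2])
  have t1: "(\<Sum>k<n. ((projw X nu M w *\<^sub>v mu) $ k - mu $ k)^2)
     = (\<Sum>k<n. (\<Sum>m=1..M. w m * ?u m k) * (\<Sum>l=1..M. w l * ?u l k))
       - 2 * (\<Sum>k<n. (\<Sum>m=1..M. w m * ?u m k) * mu $ k) + (\<Sum>k<n. mu $ k ^ 2)"
  proof -
    have "(\<Sum>k<n. ((projw X nu M w *\<^sub>v mu) $ k - mu $ k)^2) = (\<Sum>k<n.
       (\<Sum>m=1..M. w m * ?u m k) * (\<Sum>l=1..M. w l * ?u l k) - 2 * ((\<Sum>m=1..M. w m * ?u m k) * mu $ k) + mu $ k ^ 2)"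
      by (intro sum.cong refl) (simp add: PW_mv power2_eq_square algebra_simps)
    also have "\<dots> = (\<Sum>k<n. (\<Sum>m=1..M. w m * ?u m k) * (\<Sum>l=1..M. w l * ?u l k))
       - 2 * (\<Sum>k<n. (\<Sum>m=1..M. w m * ?u m k) * mu $ k) + (\<Sum>k<n. mu $ k ^ 2)"
      by (simp only: sum.distrib sum_subtractf sum_distrib_left)
    finally show ?thesis .
  qed
  have t1a: "(\<Sum>k<n. (\<Sum>m=1..M. w m * ?u m k) * (\<Sum>l=1..M. w l * ?u l k))
     = (\<Sum>m=1..M. \<Sum>l=1..M. w m * w l * c (min m l))"
    unfolding quad_exp using Mq by (intro sum.cong refl) (simp add: uu)
  have t1b: "(\<Sum>k<n. (\<Sum>m=1..M. w m * ?u m k) * mu $ k) = (\<Sum>m=1..M. w m * c m)"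
    unfolding lin_exp uc ..
  have t2: "(\<Sum>k<n. \<Sum>i<n. \<Sum>j<n. projw X nu M w $$ (k,i) * projw X nu M w $$ (k,j) * Om $$ (i,j))
      = (\<Sum>k<n. \<Sum>i<n. \<Sum>j<n. (\<Sum>m=1..M. w m * ?A m k i) * (\<Sum>l=1..M. w l * ?A l k j) * Om $$ (i,j))"
    by (intro sum.cong refl) (simp add: PW_idx)
  also have "\<dots> = (\<Sum>m=1..M. \<Sum>l=1..M. w m * w l * t (min m l))"
    unfolding triple_exp using Mq by (intro sum.cong refl) (simp add: BBP)
  finally have t2': "(\<Sum>k<n. \<Sum>i<n. \<Sum>j<n. projw X nu M w $$ (k,i) * projw X nu M w $$ (k,j) * Om $$ (i,j))
      = (\<Sum>m=1..M. \<Sum>l=1..M. w m * w l * t (min m l))" .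
  show ?thesis unfolding rf t1 t1a t1b t2'
    by (simp add: distrib_left sum.distrib)
qed

end



lemma qf_nonneg:
  fixes Om :: "real mat"
  assumes pd: "pos_def Om" and Omc: "Om \<in> carrier_mat n n"
  shows "(\<Sum>i<n. \<Sum>j<n. x i * x j * Om $$ (i,j)) \<ge> 0"
    "(\<exists>i<n. x i \<noteq> 0) \<Longrightarrow> (\<Sum>i<n. \<Sum>j<n. x i * x j * Om $$ (i,j)) > 0"
proof -
  let ?v = "vec n x"
  have eq: "(\<Sum>i<n. \<Sum>j<n. x i * x j * Om $$ (i,j)) = ?v \<bullet> (Om *\<^sub>v ?v)"
    using Omc by (auto simp: scalar_prod_def mult_mat_vec_def atLeast0LessThan sum_distrib_left
       mult_ac intro!: sum.cong)
  have dr: "dim_row Om = n" using Omc by auto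
  have pos: "?v \<noteq> 0\<^sub>v n \<Longrightarrow> ?v \<bullet> (Om *\<^sub>v ?v) > 0" using pd dr unfolding pos_def_def by auto
  show gt: "(\<exists>i<n. x i \<noteq> 0) \<Longrightarrow> (\<Sum>i<n. \<Sum>j<n. x i * x j * Om $$ (i,j)) > 0"
  proof -
    assume "\<exists>i<n. x i \<noteq> 0"
    then obtain i where "i < n" "x i \<noteq> 0" by auto
    then have "?v \<noteq> 0\<^sub>v n" by (metis index_vec index_zero_vec(1))
    then show ?thesis using pos eq by simp
  qed
  show "(\<Sum>i<n. \<Sum>j<n. x i * x j * Om $$ (i,j)) \<ge> 0"
  proof (cases "\<exists>i<n. x i \<noteq> 0")
    case True then show ?thesis using gt by fastforce
  next
    case False then show ?thesis by simp
  qed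
qed

context nested2
begin

lemma c0: "c 0 = 0"
proof -
  have "0\<^sub>m n n *\<^sub>v mu = 0\<^sub>v n" using muc by (intro eq_vecI) (auto simp: mult_mat_vec_def)
  then show ?thesis unfolding c_def using Xc muc by (simp add: projm_def)
qed
lemma t0: "t 0 = 0" unfolding t_def mtrace_def using Xc Omc by (simp add: projm_def)

lemma udiff: assumes "a \<le> b" "b \<le> q"
  shows "(\<Sum>k<n. ((P b *\<^sub>v mu) $ k - (P a *\<^sub>v mu) $ k)^2) = c b - c a"
proof -
  have "(\<Sum>k<n. ((P b *\<^sub>v mu) $ k - (P a *\<^sub>v mu) $ k)^2)
    = (\<Sum>k<n. (P b *\<^sub>v mu) $ k * (P b *\<^sub>v mu) $ k - 2 * ((P b *\<^sub>v mu) $ k * (P a *\<^sub>v mu) $ k)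
      + (P a *\<^sub>v mu) $ k * (P a *\<^sub>v mu) $ k)"
    by (intro sum.cong refl) (simp add: power2_eq_square algebra_simps)
  also have "\<dots>
    = (\<Sum>k<n. (P b *\<^sub>v mu) $ k * (P b *\<^sub>v mu) $ k) - 2 * (\<Sum>k<n. (P b *\<^sub>v mu) $ k * (P a *\<^sub>v mu) $ k)
      + (\<Sum>k<n. (P a *\<^sub>v mu) $ k * (P a *\<^sub>v mu) $ k)"
    by (simp only: sum_subtractf sum.distrib sum_distrib_left)
  also have "\<dots> = c b - c a" using assms by (simp add: uu min_def)
  finally show ?thesis .
qed

lemma S_ge: assumes "b \<le> q" shows "c b \<le> (\<Sum>k<n. mu $ k ^ 2)"
proof -
  have "0 \<le> (\<Sum>k<n. (mu $ k - (P b *\<^sub>v mu) $ k)^2)" by (simp add: sum_nonneg)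
  also have "\<dots> = (\<Sum>k<n. mu $ k ^ 2 - 2 * ((P b *\<^sub>v mu) $ k * mu $ k)
      + (P b *\<^sub>v mu) $ k * (P b *\<^sub>v mu) $ k)"
    by (intro sum.cong refl) (simp add: power2_eq_square algebra_simps)
  also have "\<dots> = (\<Sum>k<n. mu $ k ^ 2) - 2 * (\<Sum>k<n. (P b *\<^sub>v mu) $ k * mu $ k)
      + (\<Sum>k<n. (P b *\<^sub>v mu) $ k * (P b *\<^sub>v mu) $ k)"
    by (simp only: sum_subtractf sum.distrib sum_distrib_left)
  also have "\<dots> = (\<Sum>k<n. mu $ k ^ 2) - c b" using assms by (simp add: uu uc)
  finally show ?thesis by simp
qed

lemma a_nonneg: "a \<le> b \<Longrightarrow> b \<le> q \<Longrightarrow> c a \<le> c b"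
  using udiff[of a b] sum_nonneg[of "{..<n}" "\<lambda>k. ((P b *\<^sub>v mu) $ k - (P a *\<^sub>v mu) $ k)^2"]
  by simp

definition D where "D a b k i = P b $$ (k,i) - P a $$ (k,i)"

lemma tdiff: assumes "a \<le> b" "b \<le> q"
  shows "(\<Sum>k<n. \<Sum>i<n. \<Sum>j<n. D a b k i * D a b k j * Om $$ (i,j)) = t b - t a"
proof -
  let ?B = "\<lambda>x y. (\<Sum>k<n. \<Sum>i<n. \<Sum>j<n. P x $$ (k,i) * P y $$ (k,j) * Om $$ (i,j))"
  have "(\<Sum>k<n. \<Sum>i<n. \<Sum>j<n. D a b k i * D a b k j * Om $$ (i,j)) = ?B b b - ?B b a - ?B a b + ?B a a"
    unfolding D_def by (simp add: algebra_simps sum_subtractf sum.distrib)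
  also have "\<dots> = t b - t a" using assms by (simp add: BBP min_def)
  finally show ?thesis .
qed

lemma b_props: assumes pd: "pos_def Om" and ab: "a \<le> b" "b \<le> q"
  shows "t a \<le> t b" "t a = t b \<Longrightarrow> c a = c b"
    "(\<exists>k<n. \<exists>i<n. D a b k i \<noteq> 0) \<Longrightarrow> t a < t b"
proof -
  let ?q = "\<lambda>k. (\<Sum>i<n. \<Sum>j<n. D a b k i * D a b k j * Om $$ (i,j))"
  have qn: "\<And>k. ?q k \<ge> 0" using qf_nonneg(1)[OF pd Omc] by blast
  have sum: "(\<Sum>k<n. ?q k) = t b - t a" using tdiff[OF ab] .
  show "t a \<le> t b" using sum sum_nonneg[of "{..<n}" ?q] qn by simp
  show "(\<exists>k<n. \<exists>i<n. D a b k i \<noteq> 0) \<Longrightarrow> t a < t b"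
  proof -
    assume "\<exists>k<n. \<exists>i<n. D a b k i \<noteq> 0"
    then obtain k where k: "k < n" "\<exists>i<n. D a b k i \<noteq> 0" by auto
    have "?q k > 0" using qf_nonneg(2)[OF pd Omc k(2)] .
    moreover have "?q k \<le> (\<Sum>k<n. ?q k)" by (rule member_le_sum) (use qn k in auto)
    ultimately have "(\<Sum>k<n. ?q k) > 0" by linarith
    then show ?thesis using sum by simp
  qed
  show "t a = t b \<Longrightarrow> c a = c b"
  proof -
    assume "t a = t b"
    then have "(\<Sum>k<n. ?q k) = 0" using sum by simp
    then have z: "\<forall>k\<in>{..<n}. ?q k = 0" using qn by (subst (asm) sum_nonneg_eq_0_iff) auto
    have D0: "D a b k i = 0" if "k < n" "i < n" for k i
    proof (rule ccontr)
      assume "D a b k i \<noteq> 0"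
      then have "?q k > 0" using qf_nonneg(2)[OF pd Omc] that by blast
      then show False using z that by auto
    qed
    have "(P b *\<^sub>v mu) $ k = (P a *\<^sub>v mu) $ k" if k: "k < n" for k
      using D0[OF k] by (simp add: mv_idx[OF Pcar k muc] D_def)
    then have "(\<Sum>k<n. ((P b *\<^sub>v mu) $ k - (P a *\<^sub>v mu) $ k)^2) = 0" by simp
    then show "c a = c b" using udiff[OF ab] by simp
  qed
qed

lemma P1_nonzero: assumes q1: "1 \<le> q" shows "\<exists>k<n. \<exists>i<n. P 1 $$ (k,i) \<noteq> 0"
proof (rule ccontr)
  assume "\<not> ?thesis"
  then have all0: "P 1 $$ (k,i) = 0" if "k < n" "i < n" for k i using that by auto
  let ?Z = "first_cols X (nu 1)"
  have Z: "?Z \<in> carrier_mat n (nu 1)" using first_cols_carrier[OF Xc] .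
  have fr: "full_col_rank ?Z" using frk q1 by auto
  have P1: "P 1 = hat ?Z" unfolding projm_def by simp
  have "P 1 = 0\<^sub>m n n" using all0 Pcar[of 1] by (intro eq_matI) auto
  then have "?Z = 0\<^sub>m n n * ?Z" using hat_basic(3)[OF Z fr] P1 by simp
  also have "\<dots> = 0\<^sub>m n (nu 1)" using Z by (simp add: left_mult_zero_mat)
  finally have Z0: "?Z = 0\<^sub>m n (nu 1)" .
  have "nu 0 < nu (Suc 0)" using nu_strict q1 by auto
  then have nu1: "0 < nu 1" using nu0 by simp
  let ?v = "unit_vec (nu 1) 0 :: real vec"
  have Zv: "?Z *\<^sub>v ?v = 0\<^sub>v n" unfolding Z0 by (intro eq_vecI) (auto simp: mult_mat_vec_def)
  have vc: "?v \<in> carrier_vec (nu 1)" by simp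
  have fr2: "\<forall>v\<in>carrier_vec (nu 1). ?Z *\<^sub>v v = 0\<^sub>v n \<longrightarrow> v = 0\<^sub>v (nu 1)"
    using fr carrier_matD[OF Z] unfolding full_col_rank_def by simp
  have "?v = 0\<^sub>v (nu 1)" using bspec[OF fr2 vc] Zv by (rule mp)
  then show False using unit_vec_nonzero[OF nu1, where 'a=real] by simp
qed

lemma t1_pos: assumes pd: "pos_def Om" and q1: "1 \<le> q" shows "0 < t 1"
proof -
  obtain k i where ki: "k < n" "i < n" "P 1 $$ (k,i) \<noteq> 0" using P1_nonzero[OF q1] by auto
  have "P 0 = 0\<^sub>m n n" using Xc by (simp add: projm_def)
  then have "D 0 1 k i \<noteq> 0" using ki unfolding D_def by simp
  then have "\<exists>k<n. \<exists>i<n. D 0 1 k i \<noteq> 0" using ki by blast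
  then show ?thesis using b_props(3)[OF pd _ q1, of 0] t0 by simp
qed

lemma theta_eq: assumes "1 \<le> m"
  shows "theta X nu mu Om m = ((c m - c (m-1)) / real n) / (t m - t (m-1))"
proof -
  have Pc: "P m \<in> carrier_mat n n" "P (m-1) \<in> carrier_mat n n" using Pcar by auto
  have 1: "mu \<bullet> ((P m - P (m-1)) *\<^sub>v mu) = c m - c (m-1)"
    unfolding c_def using Pc muc
    by (simp add: minus_mult_distrib_mat_vec[of _ n n] scalar_prod_minus_distrib[of _ n])
  have 2: "mtrace ((P m - P (m-1)) * Om) = t m - t (m-1)"
  proof -
    have "(P m - P (m-1)) * Om = P m * Om - P (m-1) * Om"
      using Pc Omc by (rule minus_mult_distrib_mat)
    then show ?thesis unfolding t_def mtrace_def using Pc Omc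
      by (simp add: sum_subtractf)
  qed
  have 3: "dim_vec mu = n" using muc by auto
  show ?thesis unfolding theta_def 1 2 3 ..
qed

end



lemma telesc: fixes f :: "nat \<Rightarrow> real" shows "f 0 = 0 \<Longrightarrow> f m = (\<Sum>j=1..m. f j - f (j-1) :: real)"
  by (induction m) auto

lemma ind_sum: fixes m M :: nat shows "1 \<le> m \<Longrightarrow> m \<le> M \<Longrightarrow> (\<Sum>j=1..m. x j) = (\<Sum>j=1..M. if j \<le> m then x j else (0::real))"
proof -
  assume "1 \<le> m" "m \<le> M"
  have "{j \<in> {1..M}. j \<le> m} = {1..m}" using \<open>m \<le> M\<close> by (auto intro: order_trans)
  then show ?thesis by (simp add: sum.inter_filter[symmetric])
qed

lemma F_gamma:
  fixes S :: real and c t v :: "nat \<Rightarrow> real" and M :: nat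
  assumes c0: "c 0 = 0" and t0: "t 0 = 0"
  defines "g \<equiv> \<lambda>j. (\<Sum>m=1..M. if j \<le> m then v m else 0)"
  shows "S - 2*(\<Sum>m=1..M. v m * c m) + (\<Sum>m=1..M. \<Sum>l=1..M. v m * v l * (c (min m l) + t (min m l)))
    = S + (\<Sum>j=1..M. (g j)^2 * ((c j - c (j-1)) + (t j - t (j-1))) - 2 * g j * (c j - c (j-1)))"
proof -
  define a where "a j = c j - c (j-1)" for j
  define d where "d j = (c j - c (j-1)) + (t j - t (j-1))" for j
  have ca: "c m = (\<Sum>j=1..M. if j \<le> m then a j else 0)" if "1 \<le> m" "m \<le> M" for m
  proof -
    have "c m = (\<Sum>j=1..m. a j)" using telesc[of c m, OF c0] unfolding a_def .
    then show ?thesis using ind_sum[OF that] by simp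
  qed
  have kd: "c m + t m = (\<Sum>j=1..M. if j \<le> m then d j else 0)" if "1 \<le> m" "m \<le> M" for m
  proof -
    have "c m + t m = (\<Sum>j=1..m. d j)"
    proof -
      have "c m + t m = (\<Sum>j=1..m. c j - c (j-1)) + (\<Sum>j=1..m. t j - t (j-1))"
        using telesc[of c m, OF c0] telesc[of t m, OF t0] by simp
      also have "\<dots> = (\<Sum>j=1..m. d j)" unfolding d_def sum.distrib ..
      finally show ?thesis .
    qed
    then show ?thesis using ind_sum[OF that] by simp
  qed
  have lin: "(\<Sum>m=1..M. v m * c m) = (\<Sum>j=1..M. a j * g j)"
  proof -
    have "(\<Sum>m=1..M. v m * c m) = (\<Sum>m=1..M. \<Sum>j=1..M. if j \<le> m then v m * a j else 0)"
      using ca by (intro sum.cong refl) (auto simp: sum_distrib_left intro!: sum.cong)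
    also have "\<dots> = (\<Sum>j=1..M. \<Sum>m=1..M. if j \<le> m then v m * a j else 0)" by (rule sum.swap)
    also have "\<dots> = (\<Sum>j=1..M. a j * g j)" unfolding g_def
      by (intro sum.cong refl) (auto simp: sum_distrib_left mult.commute intro!: sum.cong)
    finally show ?thesis .
  qed
  have quad: "(\<Sum>m=1..M. \<Sum>l=1..M. v m * v l * (c (min m l) + t (min m l))) = (\<Sum>j=1..M. d j * (g j)^2)"
  proof -
    have "(\<Sum>m=1..M. \<Sum>l=1..M. v m * v l * (c (min m l) + t (min m l)))
       = (\<Sum>m=1..M. \<Sum>l=1..M. \<Sum>j=1..M. d j * ((if j \<le> m then v m else 0) * (if j \<le> l then v l else 0)))"
    proof (intro sum.cong refl)
      fix m l assume m: "m \<in> {1..M}" and l: "l \<in> {1..M}"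
      have "c (min m l) + t (min m l) = (\<Sum>j=1..M. if j \<le> min m l then d j else 0)"
        using kd m l by auto
      then show "v m * v l * (c (min m l) + t (min m l))
        = (\<Sum>j=1..M. d j * ((if j \<le> m then v m else 0) * (if j \<le> l then v l else 0)))"
        by (simp add: sum_distrib_left) (intro sum.cong refl, auto)
    qed
    also have "\<dots> = (\<Sum>j=1..M. \<Sum>m=1..M. \<Sum>l=1..M. d j * ((if j \<le> m then v m else 0) * (if j \<le> l then v l else 0)))"
    proof -
      have "(\<Sum>m=1..M. \<Sum>l=1..M. \<Sum>j=1..M. d j * ((if j \<le> m then v m else 0) * (if j \<le> l then v l else 0)))
        = (\<Sum>m=1..M. \<Sum>j=1..M. \<Sum>l=1..M. d j * ((if j \<le> m then v m else 0) * (if j \<le> l then v l else 0)))"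
        by (intro sum.cong refl sum.swap)
      also have "\<dots> = (\<Sum>j=1..M. \<Sum>m=1..M. \<Sum>l=1..M. d j * ((if j \<le> m then v m else 0) * (if j \<le> l then v l else 0)))"
        by (rule sum.swap)
      finally show ?thesis .
    qed
    also have "\<dots> = (\<Sum>j=1..M. d j * (g j)^2)"
      unfolding g_def power2_eq_square sum_product by (simp add: sum_distrib_left)
    finally show ?thesis .
  qed
  show ?thesis unfolding lin quad
    by (simp add: a_def d_def sum_distrib_left sum_subtractf sum.distrib algebra_simps)
qed

lemma half_bound:
  fixes a b e g :: real
  assumes "0 \<le> e" "e \<le> a" "e \<le> b"
  shows "e \<le> 2 * ((1 - g)^2 * a + g^2 * b)"
proof -
  have "(1 - g)^2 * e \<le> (1 - g)^2 * a" using assms by (intro mult_left_mono) auto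
  moreover have "g^2 * e \<le> g^2 * b" using assms by (intro mult_left_mono) auto
  moreover have "e \<le> 2 * ((1 - g)^2 + g^2) * e"
  proof -
    have h: "2 * ((1 - g)^2 + g^2) - 1 = (2*g-1)^2" by (simp add: power2_eq_square algebra_simps)
    have "1 \<le> 2 * ((1 - g)^2 + g^2)" using h zero_le_power2[of "2*g-1"] by linarith
    then show ?thesis using assms(1) by (metis mult_le_cancel_right1 mult.commute nle_le order.trans order_refl mult_right_mono mult_1)
  qed
  ultimately show ?thesis by (simp add: algebra_simps)
qed

lemma real_main:
  fixes S :: real and c t w :: "nat \<Rightarrow> real" and M :: nat
  assumes M1: "1 \<le> M"
  and c0: "c 0 = 0" and t0: "t 0 = 0"
  and amono: "\<And>j. 1 \<le> j \<Longrightarrow> j \<le> M \<Longrightarrow> c (j-1) \<le> c j"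
  and bmono: "\<And>j. 1 \<le> j \<Longrightarrow> j \<le> M \<Longrightarrow> t (j-1) \<le> t j"
  and bzero: "\<And>j. 1 \<le> j \<Longrightarrow> j \<le> M \<Longrightarrow> t (j-1) = t j \<Longrightarrow> c (j-1) = c j"
  and SM: "c M \<le> S"
  and t1: "0 < t 1"
  and ratio: "\<And>i j. 1 \<le> i \<Longrightarrow> i \<le> j \<Longrightarrow> j \<le> M \<Longrightarrow> t (i-1) < t i \<Longrightarrow> t (j-1) < t j \<Longrightarrow>
      (c j - c (j-1)) / (t j - t (j-1)) \<le> (c i - c (i-1)) / (t i - t (i-1))"
  and wsum: "(\<Sum>m=1..M. w m) = 1"
  defines "F \<equiv> \<lambda>w. S - 2*(\<Sum>m=1..M. w m * c m) + (\<Sum>m=1..M. \<Sum>l=1..M. w m * w l * (c (min m l) + t (min m l)))"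
  shows "\<exists>m0\<in>{1..M}. F (\<lambda>m. if m = m0 then 1 else 0) \<le> 2 * F w \<and> 0 < F w"
proof -
  define a where "a j = c j - c (j-1)" for j
  define b where "b j = t j - t (j-1)" for j
  define g where "g v j = (\<Sum>m=1..M. if j \<le> m then v m else 0)" for v :: "nat \<Rightarrow> real" and j
  define rest where "rest = S - (\<Sum>j=1..M. a j)"
  have Fg: "F v = rest + (\<Sum>j=1..M. (1 - g v j)^2 * a j + (g v j)^2 * b j)" for v
  proof -
    have "F v = S + (\<Sum>j=1..M. (g v j)^2 * (a j + b j) - 2 * g v j * a j)"
      unfolding F_def a_def b_def g_def by (rule F_gamma[of c t, OF c0 t0])
    also have "\<dots> = S + (\<Sum>j=1..M. ((1 - g v j)^2 * a j + (g v j)^2 * b j) - a j)"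
      by (intro arg_cong2[where f="(+)"] refl sum.cong) (auto simp: power2_eq_square algebra_simps)
    finally show ?thesis unfolding rest_def by (simp add: sum_subtractf)
  qed
  have rest0: "0 \<le> rest"
    using telesc[of c M, OF c0] SM unfolding rest_def a_def by simp
  have a0: "0 \<le> a j" "0 \<le> b j" if "j \<in> {1..M}" for j
    using amono bmono that unfolding a_def b_def by auto
  have bz: "b j = 0 \<Longrightarrow> a j = 0" if "j \<in> {1..M}" for j
    using bzero that unfolding a_def b_def by auto
  have b1: "b 1 = t 1" unfolding b_def using t0 by simp
  have g1: "g w 1 = 1" unfolding g_def using wsum by simp
  define A where "A = {m \<in> {1..M}. m = 1 \<or> (0 < b m \<and> b m \<le> a m)}"
  define m0 where "m0 = Max A"
  have finA: "finite A" and A1: "1 \<in> A" unfolding A_def using M1 by auto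
  have m0A: "m0 \<in> A" unfolding m0_def using finA A1 by (intro Max_in) auto
  then have m0r: "m0 \<in> {1..M}" unfolding A_def by auto
  have gi: "g (\<lambda>m. if m = m0 then 1 else 0) j = (if j \<le> m0 then 1 else 0)" for j
  proof -
    have "g (\<lambda>m. if m = m0 then 1 else 0) j = (\<Sum>m=1..M. if m = m0 then (if j \<le> m0 then 1 else (0::real)) else 0)"
      unfolding g_def by (intro sum.cong) auto
    then show ?thesis using m0r by simp
  qed
  define e where "e j = (if j \<le> m0 then b j else a j)" for j
  have Fi: "F (\<lambda>m. if m = m0 then 1 else 0) = rest + (\<Sum>j=1..M. e j)"
    unfolding Fg gi e_def by (intro arg_cong2[where f="(+)"] refl sum.cong) auto
  have ej: "e j \<le> 2 * ((1 - g w j)^2 * a j + (g w j)^2 * b j)" if j: "j \<in> {1..M}" for j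
  proof (cases "j = 1")
    case True
    then show ?thesis using g1 m0r a0[OF j] unfolding e_def by simp
  next
    case False
    then have j2: "2 \<le> j" using j by auto
    have "0 \<le> e j \<and> e j \<le> a j \<and> e j \<le> b j"
    proof (cases "j \<le> m0")
      case True
      have "b j \<le> a j"
      proof (cases "b j = 0")
        case True then show ?thesis using a0[OF j] by simp
      next
        case bne: False
        then have bj: "0 < b j" using a0[OF j] by simp
        have "m0 \<noteq> 1" using True j2 by auto
        then have m0p: "0 < b m0" "b m0 \<le> a m0" using m0A unfolding A_def by auto
        have "a m0 / b m0 \<le> a j / b j"
          using ratio[of j m0] j True m0r m0p bj unfolding a_def b_def by auto
        moreover have "1 \<le> a m0 / b m0" using m0p by simp
        ultimately have "1 \<le> a j / b j" by linarith
        then show ?thesis using bj by (simp add: le_divide_eq)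
      qed
      then show ?thesis using True a0[OF j] unfolding e_def by simp
    next
      case False
      have "j \<notin> A"
      proof
        assume "j \<in> A" then have "j \<le> m0" unfolding m0_def using finA by simp
        then show False using False by simp
      qed
      then have "\<not> (0 < b j \<and> b j \<le> a j)" using j j2 unfolding A_def by auto
      then have "a j \<le> b j" using bz[OF j] a0[OF j] by force
      then show ?thesis using False a0[OF j] unfolding e_def by simp
    qed
    then show ?thesis using half_bound by blast
  qed
  have tn: "0 \<le> (1 - g w j)^2 * a j + (g w j)^2 * b j" if j: "j \<in> {1..M}" for j
    using a0[OF j] by simp
  have "(\<Sum>j=1..M. e j) \<le> (\<Sum>j=1..M. 2 * ((1 - g w j)^2 * a j + (g w j)^2 * b j))"
    by (rule sum_mono) (rule ej)
  then have le: "F (\<lambda>m. if m = m0 then 1 else 0) \<le> 2 * F w"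
  proof -
    have "(\<Sum>j=1..M. 2 * ((1 - g w j)^2 * a j + (g w j)^2 * b j)) = 2 * (\<Sum>j=1..M. (1 - g w j)^2 * a j + (g w j)^2 * b j)"
      by (rule sum_distrib_left[symmetric])
    then show ?thesis unfolding Fi Fg[of w] using rest0 \<open>(\<Sum>j=1..M. e j) \<le> _\<close> by (simp add: distrib_left)
  qed
  have "(1 - g w 1)^2 * a 1 + (g w 1)^2 * b 1 \<le> (\<Sum>j=1..M. (1 - g w j)^2 * a j + (g w j)^2 * b j)"
    by (rule member_le_sum) (use M1 tn in auto)
  then have "0 < F w" unfolding Fg[of w] using g1 b1 t1 rest0 by simp
  then show ?thesis using le m0r by blast
qed




lemma divswap: "x / n / y = x / y / (n::real)" by (simp add: divide_divide_eq_left mult.commute)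

lemma theta_mono:
  fixes th :: "nat \<Rightarrow> real"
  assumes A: "\<forall>m. 1 \<le> m \<and> m < q \<longrightarrow> th (Suc m) \<le> th m"
  shows "1 \<le> i \<Longrightarrow> i \<le> j \<Longrightarrow> j \<le> q \<Longrightarrow> th j \<le> th i"
proof (induction j)
  case 0 then show ?case by simp
next
  case (Suc j)
  show ?case
  proof (cases "i = Suc j")
    case True then show ?thesis by simp
  next
    case False
    then have "th j \<le> th i" using Suc by auto
    moreover have "th (Suc j) \<le> th j" using A Suc False by auto
    ultimately show ?thesis by simp
  qed
qed

lemma per_n:
  fixes Mes :: "'a measure" and eps :: "nat \<Rightarrow> 'a \<Rightarrow> real" and X :: "real mat" and beta :: "real vec"
    and Om :: "real mat" and p q M :: nat and nu :: "nat \<Rightarrow> nat" and mstar :: nat and wstar :: "nat \<Rightarrow> real"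
  assumes model: "prob_space Mes \<and>
      X \<in> carrier_mat n p \<and> beta \<in> carrier_vec p \<and> p < n \<and>
      nu 0 = 0 \<and> (\<forall>m < q. nu m < nu (Suc m)) \<and> nu q = p \<and>
      (\<forall>m \<in> {1..q}. full_col_rank (first_cols X (nu m))) \<and>
      2 \<le> M \<and> M \<le> q \<and>
      Om \<in> carrier_mat n n \<and> pos_def Om \<and>
      (\<forall>i < n. integrable Mes (eps i) \<and> (\<integral>\<omega>. eps i \<omega> \<partial>Mes) = 0) \<and>
      (\<forall>i < n. \<forall>j < n. integrable Mes (\<lambda>\<omega>. eps i \<omega> * eps j \<omega>) \<and>
          (\<integral>\<omega>. eps i \<omega> * eps j \<omega> \<partial>Mes) = Om $$ (i, j))"
  and mstar_min: "mstar \<in> {1..M} \<and>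
      (\<forall>m \<in> {1..M}. riskm Mes eps (X *\<^sub>v beta) X nu mstar
                       \<le> riskm Mes eps (X *\<^sub>v beta) X nu m)"
  and wstar_min: "wstar \<in> simplexW M \<and>
      (\<forall>w \<in> simplexW M. riskw Mes eps (X *\<^sub>v beta) X nu M wstar
                       \<le> riskw Mes eps (X *\<^sub>v beta) X nu M w)"
  and A3: "\<forall>m. 1 \<le> m \<and> m < q \<longrightarrow>
      theta X nu (X *\<^sub>v beta) Om (Suc m) \<le> theta X nu (X *\<^sub>v beta) Om m"
  shows "let Rm = riskm Mes eps (X *\<^sub>v beta) X nu mstar;
           Rw = riskw Mes eps (X *\<^sub>v beta) X nu M wstar
       in Rm / 2 \<le> Rw \<and> Rw \<le> Rm \<and> 0 < Rw \<and> Rm - Rw \<le> Rm / 2"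
proof -
  define mu where "mu = X *\<^sub>v beta"
  have ps: "prob_space Mes" and Xc: "X \<in> carrier_mat n p" and bc: "beta \<in> carrier_vec p"
    and pn: "p < n" and nu0: "nu 0 = 0" and nus: "\<forall>m < q. nu m < nu (Suc m)" and nuq: "nu q = p"
    and frk: "\<forall>m \<in> {1..q}. full_col_rank (first_cols X (nu m))" and M2: "2 \<le> M" and Mq: "M \<le> q"
    and Omc: "Om \<in> carrier_mat n n" and pd: "pos_def Om"
    and e1: "\<forall>i < n. integrable Mes (eps i) \<and> (\<integral>\<omega>. eps i \<omega> \<partial>Mes) = 0"
    and e2: "\<forall>i < n. \<forall>j < n. integrable Mes (\<lambda>\<omega>. eps i \<omega> * eps j \<omega>) \<and>
          (\<integral>\<omega>. eps i \<omega> * eps j \<omega> \<partial>Mes) = Om $$ (i, j)"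
    using model by auto
  have muc: "mu \<in> carrier_vec n" unfolding mu_def using Xc bc by simp
  have Omsym: "Om\<^sup>T = Om" using pd unfolding pos_def_def by simp
  interpret N: nested2 n p q X nu Om mu
    by unfold_locales (use Xc nu0 nus nuq frk Omc Omsym muc in auto)
  define S where "S = (\<Sum>k<n. mu $ k ^ 2)"
  define F where "F = (\<lambda>w. S - 2*(\<Sum>m=1..M. w m * N.c m) + (\<Sum>m=1..M. \<Sum>l=1..M. w m * w l * (N.c (min m l) + N.t (min m l))))"
  have RW: "riskw Mes eps mu X nu M w = F w" for w
    unfolding riskw_def F_def S_def by (rule N.riskW[OF ps Mq e1 e2])
  have ind: "projw X nu M (\<lambda>l. if l = m then 1 else 0) = projm X nu m" if m: "m \<in> {1..M}" for m
  proof (rule eq_matI)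
    fix k i assume "k < dim_row (projm X nu m)" "i < dim_col (projm X nu m)"
    then have ki: "k < n" "i < n" using N.Pcar[of m] by auto
    have "projw X nu M (\<lambda>l. if l = m then 1 else 0) $$ (k,i) = (\<Sum>l=1..M. (if l = m then 1 else 0) * projm X nu l $$ (k,i))"
      by (rule N.PW_idx[OF ki])
    also have "\<dots> = (\<Sum>l=1..M. if l = m then projm X nu m $$ (k,i) else 0)" by (intro sum.cong) auto
    also have "\<dots> = projm X nu m $$ (k,i)" using m by simp
    finally show "projw X nu M (\<lambda>l. if l = m then 1 else 0) $$ (k,i) = projm X nu m $$ (k,i)" .
  qed (use N.Pcar[of m] N.PW_car[of M] in auto)
  have RM: "riskm Mes eps mu X nu m = F (\<lambda>l. if l = m then 1 else 0)" if m: "m \<in> {1..M}" for m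
    unfolding riskm_def RW[symmetric] riskw_def ind[OF m] ..
  have ratio: "(N.c j - N.c (j-1)) / (N.t j - N.t (j-1)) \<le> (N.c i - N.c (i-1)) / (N.t i - N.t (i-1))"
    if "1 \<le> i" "i \<le> j" "j \<le> M" for i j
  proof -
    have "theta X nu mu Om j \<le> theta X nu mu Om i"
      using theta_mono[of q "theta X nu mu Om", OF A3[folded mu_def]] that Mq by auto
    then have "((N.c j - N.c (j-1)) / (N.t j - N.t (j-1))) / real n \<le> ((N.c i - N.c (i-1)) / (N.t i - N.t (i-1))) / real n"
      using N.theta_eq[of j] N.theta_eq[of i] that by (simp only: divswap)
    moreover have "0 < real n" using pn by simp
    ultimately show ?thesis by (subst (asm) divide_le_cancel) auto
  qed
  have wsum: "(\<Sum>m=1..M. wstar m) = 1" using wstar_min unfolding simplexW_def by auto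
  have m1: "1 \<le> M" using M2 by simp
  have am: "N.c (j-1) \<le> N.c j" if "1 \<le> j" "j \<le> M" for j
    using N.a_nonneg[of "j-1" j] that Mq by auto
  have bm: "N.t (j-1) \<le> N.t j" if "1 \<le> j" "j \<le> M" for j
    using N.b_props(1)[OF pd, of "j-1" j] that Mq by auto
  have bz: "N.c (j-1) = N.c j" if "1 \<le> j" "j \<le> M" "N.t (j-1) = N.t j" for j
    using N.b_props(2)[OF pd, of "j-1" j] that Mq by auto
  have SM: "N.c M \<le> S" using N.S_ge[OF Mq] unfolding S_def .
  have t1: "0 < N.t 1" using N.t1_pos[OF pd] M2 Mq by simp
  have "\<exists>m0\<in>{1..M}. F (\<lambda>m. if m = m0 then 1 else 0) \<le> 2 * F wstar \<and> 0 < F wstar"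
    using real_main[of M N.c N.t S wstar, OF m1 N.c0 N.t0 am bm bz SM t1 ratio wsum] unfolding F_def by simp
  then obtain m0 where m0: "m0 \<in> {1..M}" "F (\<lambda>m. if m = m0 then 1 else 0) \<le> 2 * F wstar" "0 < F wstar"
    by blast
  have Rm_le: "riskm Mes eps mu X nu mstar \<le> 2 * F wstar"
  proof -
    have "riskm Mes eps mu X nu mstar \<le> riskm Mes eps mu X nu m0" using mstar_min[folded mu_def] m0(1) by blast
    then show ?thesis using m0(2) RM[OF m0(1)] by simp
  qed
  have ins: "(\<lambda>l. if l = mstar then 1 else 0) \<in> simplexW M"
    using mstar_min unfolding simplexW_def by simp
  have Rw_le: "F wstar \<le> riskm Mes eps mu X nu mstar"
  proof -
    have "F wstar = riskw Mes eps mu X nu M wstar" using RW by simp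
    also have "\<dots> \<le> riskw Mes eps mu X nu M (\<lambda>l. if l = mstar then 1 else 0)"
      using wstar_min[folded mu_def] ins by blast
    also have "\<dots> = riskm Mes eps mu X nu mstar" using RW RM mstar_min by simp
    finally show ?thesis .
  qed
  show ?thesis unfolding Let_def mu_def[symmetric] RW using Rm_le Rw_le m0(3) by simp
qed


theorem theorem1:
  fixes Mes :: "nat \<Rightarrow> 'a measure"
    and eps :: "nat \<Rightarrow> nat \<Rightarrow> 'a \<Rightarrow> real"
    and X :: "nat \<Rightarrow> real mat" and beta :: "nat \<Rightarrow> real vec" and Om :: "nat \<Rightarrow> real mat"
    and p q M :: "nat \<Rightarrow> nat" and nu :: "nat \<Rightarrow> nat \<Rightarrow> nat"
    and mstar :: "nat \<Rightarrow> nat" and wstar :: "nat \<Rightarrow> nat \<Rightarrow> real"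
    and c1 c2 :: real
  assumes model: "\<forall>\<^sub>F n in sequentially.
      prob_space (Mes n) \<and>
      X n \<in> carrier_mat n (p n) \<and> beta n \<in> carrier_vec (p n) \<and> p n < n \<and>
      nu n 0 = 0 \<and> (\<forall>m < q n. nu n m < nu n (Suc m)) \<and> nu n (q n) = p n \<and>
      (\<forall>m \<in> {1..q n}. full_col_rank (first_cols (X n) (nu n m))) \<and>
      2 \<le> M n \<and> M n \<le> q n \<and>
      Om n \<in> carrier_mat n n \<and> pos_def (Om n) \<and>
      (\<forall>i < n. integrable (Mes n) (eps n i) \<and> (\<integral>\<omega>. eps n i \<omega> \<partial>Mes n) = 0) \<and>
      (\<forall>i < n. \<forall>j < n. integrable (Mes n) (\<lambda>\<omega>. eps n i \<omega> * eps n j \<omega>) \<and>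
          (\<integral>\<omega>. eps n i \<omega> * eps n j \<omega> \<partial>Mes n) = Om n $$ (i, j))"
  and mstar_min: "\<forall>\<^sub>F n in sequentially. mstar n \<in> {1..M n} \<and>
      (\<forall>m \<in> {1..M n}. riskm (Mes n) (eps n) (X n *\<^sub>v beta n) (X n) (nu n) (mstar n)
                       \<le> riskm (Mes n) (eps n) (X n *\<^sub>v beta n) (X n) (nu n) m)"
  and wstar_min: "\<forall>\<^sub>F n in sequentially. wstar n \<in> simplexW (M n) \<and>
      (\<forall>w \<in> simplexW (M n). riskw (Mes n) (eps n) (X n *\<^sub>v beta n) (X n) (nu n) (M n) (wstar n)
                       \<le> riskw (Mes n) (eps n) (X n *\<^sub>v beta n) (X n) (nu n) (M n) w)"
  and A1: "\<exists>C. \<forall>\<^sub>F n in sequentially.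
      ((X n *\<^sub>v beta n) \<bullet> (X n *\<^sub>v beta n)) / real n \<le> C"
  and A2: "0 < c1" "c1 \<le> c2"
      "\<And>n k. eigenvalue (Om n) k \<Longrightarrow> c1 < k \<and> k < c2"
  and A3: "\<forall>\<^sub>F n in sequentially. \<forall>m. 1 \<le> m \<and> m < q n \<longrightarrow>
      theta (X n) (nu n) (X n *\<^sub>v beta n) (Om n) (Suc m) \<le> theta (X n) (nu n) (X n *\<^sub>v beta n) (Om n) m"
  and A6: "\<forall>\<^sub>F n in sequentially.
      (let D = {m \<in> {1..q n}. theta (X n) (nu n) (X n *\<^sub>v beta n) (Om n) m > 0};
           d = Max D;
           R = riskm (Mes n) (eps n) (X n *\<^sub>v beta n) (X n) (nu n)
       in D \<noteq> {} \<and>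
          (\<exists>m'. 1 \<le> m' \<and> m' \<le> d - 1 \<and>
             (\<forall>m. 2 \<le> m \<and> m \<le> m' \<longrightarrow> R m < R (m - 1)) \<and>
             (\<forall>m. m' < m \<and> m \<le> d \<longrightarrow> R m \<ge> R (m - 1)) \<and>
             R d > R (d - 1)))"
  shows "\<forall>\<^sub>F n in sequentially.
      (let Rm = riskm (Mes n) (eps n) (X n *\<^sub>v beta n) (X n) (nu n) (mstar n);
           Rw = riskw (Mes n) (eps n) (X n *\<^sub>v beta n) (X n) (nu n) (M n) (wstar n)
       in Rm / 2 \<le> Rw \<and> Rw \<le> Rm \<and> 0 < Rw \<and> Rm - Rw \<le> Rm / 2)"
    using model mstar_min wstar_min A3
proof eventually_elim
  case (elim n)
  show ?case by (rule per_n[OF elim(1) elim(2) elim(3) elim(4)])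
qed

end
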